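(* Let $n\ge 3$ and let $\mathcal D_n$ be a minimal DFA with state set $Q_n=\{0,\dots,n-1\}$ and initial state $0$ recognizing a left ideal, and let $T_n$ be its transition semigroup. If $|T_n|=n^{n-1}+n-1$, then $T_n=S_n$.
   Context: A left ideal is a nonempty $L\subseteq\Sigma^*$ with $L=\Sigma^*L$. The transition semigroup of a DFA is the set of transformations $q\mapsto\delta(q,w)$ of its state set induced by nonempty words $w$. Notation: for a transformation $t$, $qt$ is the image of $q$; $(p\to q)$ maps $p$ to $q$ and fixes all other states; $(Q_n\to q)$ is the constant map to $q$; $(p_0,\dots,p_{k-1})$ is the cyclic permutation $p_0\mapsto p_1\mapsto\cdots\mapsto p_{k-1}\mapsto p_0$ fixing all other states. $S_n$ (for $n\ge3$) is the transition semigroup of the DFA $\mathcal W_n$ with states $Q_n$, initial state $0$, final states $\{n-1\}$, alphabet $\{a,b,c,d,e\}$, where $a$ induces $(1,2,\dots,n-1)$, $b$ induces $(1,2)$, $c$ induces $(n-1\to 1)$, $d$ induces $(n-1\to 0)$, and $e$ induces $(Q_n\to 1)$. *)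

theory Defs
  imports Main
begin

text \<open>A DFA has state set Q_n = {0..<n}, initial state 0, a finite alphabet Sigma,
a transition function delta (only its values on Q_n x Sigma matter) and final states F.\<close>

definition is_dfa :: "nat \<Rightarrow> 'a set \<Rightarrow> (nat \<Rightarrow> 'a \<Rightarrow> nat) \<Rightarrow> nat set \<Rightarrow> bool" where
  "is_dfa n \<Sigma> \<delta> F \<longleftrightarrow> finite \<Sigma> \<and> (\<forall>q<n. \<forall>a\<in>\<Sigma>. \<delta> q a < n) \<and> F \<subseteq> {..<n}"

definition dfa_lang :: "'a set \<Rightarrow> (nat \<Rightarrow> 'a \<Rightarrow> nat) \<Rightarrow> nat set \<Rightarrow> 'a list set" where
  "dfa_lang \<Sigma> \<delta> F = {w \<in> lists \<Sigma>. foldl \<delta> 0 w \<in> F}"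

definition minimal_dfa :: "nat \<Rightarrow> 'a set \<Rightarrow> (nat \<Rightarrow> 'a \<Rightarrow> nat) \<Rightarrow> nat set \<Rightarrow> bool" where
  "minimal_dfa n \<Sigma> \<delta> F \<longleftrightarrow> is_dfa n \<Sigma> \<delta> F
     \<and> (\<forall>q<n. \<exists>w\<in>lists \<Sigma>. foldl \<delta> 0 w = q)
     \<and> (\<forall>p<n. \<forall>q<n. p \<noteq> q \<longrightarrow> (\<exists>w\<in>lists \<Sigma>. (foldl \<delta> p w \<in> F) \<noteq> (foldl \<delta> q w \<in> F)))"

definition left_ideal :: "'a set \<Rightarrow> 'a list set \<Rightarrow> bool" where
  "left_ideal \<Sigma> L \<longleftrightarrow> L \<noteq> {} \<and> L = {u @ v | u v. u \<in> lists \<Sigma> \<and> v \<in> L}"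

definition word_trans :: "nat \<Rightarrow> (nat \<Rightarrow> 'a \<Rightarrow> nat) \<Rightarrow> 'a list \<Rightarrow> nat \<Rightarrow> nat" where
  "word_trans n \<delta> w = (\<lambda>q. if q < n then foldl \<delta> q w else q)"

definition trans_semigroup :: "nat \<Rightarrow> 'a set \<Rightarrow> (nat \<Rightarrow> 'a \<Rightarrow> nat) \<Rightarrow> (nat \<Rightarrow> nat) set" where
  "trans_semigroup n \<Sigma> \<delta> = {word_trans n \<delta> w | w. w \<in> lists \<Sigma> \<and> w \<noteq> []}"

datatype wletter = La | Lb | Lc | Ld | Le

text \<open>Transitions of W_n: a = (1,2,...,n-1), b = (1,2), c = (n-1 -> 1), d = (n-1 -> 0), e = (Q_n -> 1).\<close>
fun W_delta :: "nat \<Rightarrow> nat \<Rightarrow> wletter \<Rightarrow> nat" where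
  "W_delta n q La = (if q = 0 then 0 else if q = n - 1 then 1 else q + 1)"
| "W_delta n q Lb = (if q = 1 then 2 else if q = 2 then 1 else q)"
| "W_delta n q Lc = (if q = n - 1 then 1 else q)"
| "W_delta n q Ld = (if q = n - 1 then 0 else q)"
| "W_delta n q Le = 1"

definition S :: "nat \<Rightarrow> (nat \<Rightarrow> nat) set" where
  "S n = trans_semigroup n UNIV (W_delta n)"

end

theory Submission
  imports Defs "HOL-Combinatorics.Permutations"
begin


definition extf :: "nat \<Rightarrow> (nat \<Rightarrow> nat) \<Rightarrow> bool" where
  "extf n f \<longleftrightarrow> (\<forall>q<n. f q < n) \<and> (\<forall>q. n \<le> q \<longrightarrow> f q = q)"

definition Maps0 :: "nat \<Rightarrow> (nat \<Rightarrow> nat) set" where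
  "Maps0 n = {f. extf n f \<and> f 0 = 0}"

definition cst :: "nat \<Rightarrow> nat \<Rightarrow> nat \<Rightarrow> nat" where
  "cst n c = (\<lambda>q. if q < n then c else q)"

definition UU :: "nat \<Rightarrow> (nat \<Rightarrow> nat) set" where
  "UU n = Maps0 n \<union> cst n ` {1..<n}"

definition elem :: "nat \<Rightarrow> nat \<Rightarrow> nat \<Rightarrow> nat" where
  "elem i j = (\<lambda>q. if q = i then j else q)"

lemma foldl_range:
  assumes "\<And>q x. q < n \<Longrightarrow> x \<in> A \<Longrightarrow> d q x < n" "w \<in> lists A" "q < n"
  shows "foldl d q w < n"
  using assms(2,3) by (induction w arbitrary: q) (auto simp: assms(1))

lemma word_trans_append:
  assumes "\<And>q x. q < n \<Longrightarrow> x \<in> A \<Longrightarrow> d q x < n" "u \<in> lists A"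
  shows "word_trans n d (u @ v) = word_trans n d v \<circ> word_trans n d u"
proof
  fix q show "word_trans n d (u @ v) q = (word_trans n d v \<circ> word_trans n d u) q"
    using foldl_range[OF assms(1) assms(2)] by (auto simp: word_trans_def)
qed

lemma word_trans_extf:
  assumes "\<And>q x. q < n \<Longrightarrow> x \<in> A \<Longrightarrow> d q x < n" "u \<in> lists A"
  shows "extf n (word_trans n d u)"
  using foldl_range[OF assms] by (auto simp: word_trans_def extf_def)

context
  fixes n :: nat
  assumes n3: "3 \<le> n"
begin

abbreviation "wt \<equiv> word_trans n (W_delta n)"

lemma W_range: "q < n \<Longrightarrow> W_delta n q x < n"
  using n3 by (cases x) auto

lemma wt_append: "wt (u @ v) = wt v \<circ> wt u"
  by (rule word_trans_append[where A = UNIV]) (auto simp: W_range)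

definition inM :: "(nat \<Rightarrow> nat) \<Rightarrow> bool" where
  "inM f \<longleftrightarrow> (\<exists>w. f = wt w)"

lemma inM_id: "inM id"
  unfolding inM_def by (rule exI[of _ "[]"]) (auto simp: word_trans_def)

lemma inM_comp: "inM f \<Longrightarrow> inM g \<Longrightarrow> inM (g \<circ> f)"
  unfolding inM_def by (metis wt_append)

lemma inM_letter: "inM (\<lambda>q. if q < n then W_delta n q x else q)"
  unfolding inM_def by (rule exI[of _ "[x]"]) (auto simp: word_trans_def)

lemma inM_b: "inM (Transposition.transpose 1 2)"
proof -
  have "(\<lambda>q. if q < n then W_delta n q Lb else q) = Transposition.transpose 1 2"
    using n3 by (auto simp: fun_eq_iff transpose_def)
  then show ?thesis using inM_letter[of Lb] by simp
qed

lemma inM_c: "inM (elem (n-1) 1)"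
proof -
  have "(\<lambda>q. if q < n then W_delta n q Lc else q) = elem (n-1) 1"
    using n3 by (auto simp: fun_eq_iff elem_def)
  then show ?thesis using inM_letter[of Lc] by simp
qed

lemma inM_d: "inM (elem (n-1) 0)"
proof -
  have "(\<lambda>q. if q < n then W_delta n q Ld else q) = elem (n-1) 0"
    using n3 by (auto simp: fun_eq_iff elem_def)
  then show ?thesis using inM_letter[of Ld] by simp
qed

definition rot :: "nat \<Rightarrow> nat \<Rightarrow> nat" where
  "rot k q = (if 1 \<le> q \<and> q < n then (q - 1 + k) mod (n - 1) + 1 else q)"

lemma foldl_rot: "q < n \<Longrightarrow> foldl (W_delta n) q (replicate k La) = rot k q"
proof (induction k arbitrary: q)
  case 0
  then show ?case by (auto simp: rot_def)
next
  case (Suc k)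
  have r: "W_delta n q La < n" using W_range Suc.prems by blast
  have "foldl (W_delta n) q (replicate (Suc k) La) = foldl (W_delta n) (W_delta n q La) (replicate k La)"
    by simp
  also have "\<dots> = rot k (W_delta n q La)" by (rule Suc.IH[OF r])
  also have "\<dots> = rot (Suc k) q"
  proof (cases "q = 0")
    case True then show ?thesis by (simp add: rot_def)
  next
    case False
    show ?thesis
    proof (cases "q = n - 1")
      case True
      have e: "n - 1 - 1 + Suc k = k + (n - 1)" using n3 by arith
      have "(0 + k) mod (n - 1) = (n - 1 - 1 + Suc k) mod (n - 1)"
        unfolding e by simp
      then show ?thesis using True n3 by (simp add: rot_def)
    next
      case False
      then have "W_delta n q La = q + 1" using \<open>q \<noteq> 0\<close> by simp
      moreover have "Suc q < n" using False Suc.prems by arith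
      ultimately show ?thesis using False \<open>q \<noteq> 0\<close> Suc.prems n3 by (simp add: rot_def)
    qed
  qed
  finally show ?case .
qed

lemma wt_rot: "wt (replicate k La) = rot k"
proof
  fix q show "wt (replicate k La) q = rot k q"
    using foldl_rot[of q k] by (auto simp: word_trans_def rot_def)
qed

lemma inM_rot: "inM (rot k)"
  unfolding inM_def using wt_rot by metis

lemma rot_rot: assumes "k + m = n - 1" shows "rot k (rot m q) = q"
proof (cases "1 \<le> q \<and> q < n")
  case True
  have n1: "n - 1 > 0" using n3 by simp
  let ?r = "(q - 1 + m) mod (n - 1) + 1"
  have "(q - 1 + m) mod (n - 1) < n - 1" using n1 by simp
  then have r1: "1 \<le> ?r" "?r < n" by arith+
  have "rot k (rot m q) = ((q - 1 + m) mod (n - 1) + k) mod (n - 1) + 1"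
    using True r1 by (simp add: rot_def)
  also have "((q - 1 + m) mod (n - 1) + k) mod (n - 1) = (q - 1 + (n - 1)) mod (n - 1)"
    using assms by (simp add: mod_add_left_eq add.assoc add.commute[of m k])
  also have "\<dots> = (q - 1) mod (n - 1)" by (rule mod_add_self2)
  also have "\<dots> = q - 1" using True by (intro mod_less) arith
  finally show ?thesis using True by simp
qed (auto simp: rot_def)

lemma inj_rot: "inj (rot k)" if "k \<le> n - 1"
proof -
  have "rot (n - 1 - k) (rot k q) = q" for q using rot_rot[of "n - 1 - k" k] that by simp
  then show ?thesis by (metis injI)
qed

lemma inj_transpose_commute: "inj g \<Longrightarrow> g (Transposition.transpose a b x) = Transposition.transpose (g a) (g b) (g x)"
  by (auto simp: transpose_def inj_eq)

lemma rot_1: "k < n - 1 \<Longrightarrow> rot k 1 = k + 1" using n3 by (simp add: rot_def)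
lemma rot_2: "k + 1 < n - 1 \<Longrightarrow> rot k 2 = k + 2" using n3 by (simp add: rot_def)

lemma inM_adj: assumes "1 \<le> i" "i + 1 < n" shows "inM (Transposition.transpose i (i + 1))"
proof -
  let ?k = "i - 1" let ?m = "n - 1 - (i - 1)"
  have eq: "rot ?k \<circ> Transposition.transpose 1 2 \<circ> rot ?m = Transposition.transpose i (i + 1)"
  proof
    fix q
    have q: "q = rot ?k (rot ?m q)" using rot_rot[of ?k ?m q] assms by simp
    have "(rot ?k \<circ> Transposition.transpose 1 2 \<circ> rot ?m) q = Transposition.transpose (rot ?k 1) (rot ?k 2) (rot ?k (rot ?m q))"
      using inj_transpose_commute[OF inj_rot, of ?k] assms by simp
    also have "\<dots> = Transposition.transpose i (i + 1) q"
      using q rot_1[of ?k] rot_2[of ?k] assms by simp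
    finally show "(rot ?k \<circ> Transposition.transpose 1 2 \<circ> rot ?m) q = Transposition.transpose i (i + 1) q" .
  qed
  have "inM (rot ?k \<circ> Transposition.transpose 1 2 \<circ> rot ?m)"
    by (intro inM_comp inM_rot inM_b)
  then show ?thesis using eq by simp
qed

lemma inM_transpose_lt: assumes "1 \<le> i" "i < j" "j < n" shows "inM (Transposition.transpose i j)"
  using assms
proof (induction j rule: less_induct)
  case (less j)
  show ?case
  proof (cases "j = i + 1")
    case True then show ?thesis using inM_adj less.prems by simp
  next
    case False
    define l where "l = j - 1"
    have l: "j = l + 1" "i < l" using less.prems False unfolding l_def by arith+
    have "Transposition.transpose l (l + 1) \<circ> Transposition.transpose i l \<circ> Transposition.transpose l (l + 1) = Transposition.transpose i j"
      using l by (auto simp: fun_eq_iff transpose_def)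
    moreover have "inM (Transposition.transpose l (l + 1) \<circ> Transposition.transpose i l \<circ> Transposition.transpose l (l + 1))"
      using less.prems l by (intro inM_comp inM_adj less.IH) auto
    ultimately show ?thesis by simp
  qed
qed

lemma inM_transpose: assumes "a \<in> {1..<n}" "b \<in> {1..<n}" shows "inM (Transposition.transpose a b)"
proof -
  consider "a < b" | "a = b" | "b < a" by arith
  then show ?thesis
  proof cases
    case 1 then show ?thesis using inM_transpose_lt assms by auto
  next
    case 2 then show ?thesis using inM_id by (simp add: transpose_same id_def)
  next
    case 3 then show ?thesis using inM_transpose_lt[of b a] assms by (auto simp: transpose_commute)
  qed
qed

lemma inM_perm: assumes "p permutes {1..<n}" shows "inM p"
  using assms(1) finite_atLeastLessThan
proof (induction rule: permutes_induct)
  case id then show ?case by (rule inM_id)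
next
  case (swap a b p) then show ?case using inM_comp inM_transpose by blast
qed

lemma transpose_elem_conj:
  "Transposition.transpose x y \<circ> elem i j \<circ> Transposition.transpose x y
   = elem (Transposition.transpose x y i) (Transposition.transpose x y j)"
  by (auto simp: fun_eq_iff transpose_def elem_def)

lemma inM_elem_top: assumes "j < n" "j \<noteq> n - 1" shows "inM (elem (n - 1) j)"
proof (cases "j = 0")
  case True then show ?thesis using inM_d by simp
next
  case False
  have "Transposition.transpose 1 j \<circ> elem (n - 1) 1 \<circ> Transposition.transpose 1 j = elem (n - 1) j"
    unfolding transpose_elem_conj using assms n3 by (auto simp: transpose_def)
  moreover have "inM (Transposition.transpose 1 j \<circ> elem (n - 1) 1 \<circ> Transposition.transpose 1 j)"
    using False assms n3 by (intro inM_comp inM_transpose inM_c) auto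
  ultimately show ?thesis by simp
qed

lemma inM_elem: assumes "i \<in> {1..<n}" "j < n" "i \<noteq> j" shows "inM (elem i j)"
proof (cases "i = n - 1")
  case True then show ?thesis using inM_elem_top assms by simp
next
  case False
  let ?t = "Transposition.transpose i (n - 1)"
  have "?t \<circ> elem (n - 1) (?t j) \<circ> ?t = elem i j"
    unfolding transpose_elem_conj using assms n3 by (auto simp: transpose_def)
  moreover have "inM (?t \<circ> elem (n - 1) (?t j) \<circ> ?t)"
    using False assms n3 by (intro inM_comp inM_transpose inM_elem_top) (auto simp: transpose_def)
  ultimately show ?thesis by simp
qed

lemma bij_perm: assumes "f \<in> Maps0 n" "f ` {..<n} = {..<n}" shows "f permutes {1..<n}"
proof -
  have inj: "inj_on f {..<n}" using assms(2) by (simp add: eq_card_imp_inj_on)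
  have ext: "\<forall>q<n. f q < n" "\<forall>q. n \<le> q \<longrightarrow> f q = q" "f 0 = 0" using assms(1) by (auto simp: Maps0_def extf_def)
  show ?thesis
  proof (rule bij_imp_permutes)
    have "f ` {1..<n} = {1..<n}"
    proof -
      have "{..<n} = insert 0 {1..<n}" using n3 by auto
      then have "f ` {..<n} = insert 0 (f ` {1..<n})" using ext by simp
      moreover have "0 \<notin> f ` {1..<n}"
      proof
        assume "0 \<in> f ` {1..<n}" then obtain q where "q \<in> {1..<n}" "f q = 0" by auto
        moreover have "q \<in> {..<n}" "0 \<in> {..<n}" using \<open>q \<in> {1..<n}\<close> by auto
        ultimately have "q = 0" using inj ext(3) unfolding inj_on_def by metis
        then show False using \<open>q \<in> {1..<n}\<close> by simp
      qed
      ultimately have "f ` {1..<n} = f ` {..<n} - {0}" by auto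
      then show ?thesis using assms(2) by auto
    qed
    moreover have "inj_on f {1..<n}" using inj by (rule inj_on_subset) auto
    ultimately show "bij_betw f {1..<n} {1..<n}" by (simp add: bij_betw_def)
  next
    fix x assume "x \<notin> {1..<n}" then show "f x = x" using ext by (cases "x = 0") auto
  qed
qed

lemma Maps0_inM: "f \<in> Maps0 n \<Longrightarrow> inM f"
proof (induction "card ({..<n} - f ` {..<n})" arbitrary: f rule: less_induct)
  case less
  have ext: "\<forall>q<n. f q < n" "\<forall>q. n \<le> q \<longrightarrow> f q = q" "f 0 = 0" using less.prems by (auto simp: Maps0_def extf_def)
  have sub: "f ` {..<n} \<subseteq> {..<n}" using ext by auto
  show ?case
  proof (cases "f ` {..<n} = {..<n}")
    case True then show ?thesis using inM_perm bij_perm less.prems by blast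
  next
    case False
    then obtain z where z: "z < n" "z \<notin> f ` {..<n}" using sub by auto
    have "\<not> inj_on f {..<n}"
    proof
      assume "inj_on f {..<n}"
      then have "card (f ` {..<n}) = n" by (simp add: card_image)
      then show False using False sub by (metis card_lessThan card_subset_eq finite_lessThan)
    qed
    then obtain r s where rs: "r < n" "s < n" "r \<noteq> s" "f r = f s" by (auto simp: inj_on_def)
    obtain s' r' where rs': "r' < n" "s' < n" "s' \<noteq> 0" "f r' = f s'" "r' \<noteq> s'"
    proof (cases "s = 0")
      case True then show ?thesis using rs that by (metis neq0_conv)
    next
      case False then show ?thesis using rs that by metis
    qed
    have z0: "z \<noteq> 0" using z(2) ext(3) n3 by force
    define g where "g = f(s' := z)"
    have gM: "g \<in> Maps0 n" using less.prems rs' z by (auto simp: g_def Maps0_def extf_def)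
    have gimg: "g ` {..<n} = insert z (f ` {..<n})"
    proof
      show "g ` {..<n} \<subseteq> insert z (f ` {..<n})" by (auto simp: g_def)
      show "insert z (f ` {..<n}) \<subseteq> g ` {..<n}"
      proof
        fix y assume "y \<in> insert z (f ` {..<n})"
        then consider "y = z" | q where "q < n" "y = f q" by auto
        then show "y \<in> g ` {..<n}"
        proof cases
          case 1 then show ?thesis using rs' by (auto simp: g_def intro!: image_eqI[of _ _ s'])
        next
          case 2
          show ?thesis
          proof (cases "q = s'")
            case True
            then have "y = g r'" using 2 rs' by (simp add: g_def)
            then show ?thesis using rs' by auto
          next
            case False
            then have "y = g q" using 2 by (simp add: g_def)
            then show ?thesis using 2 by auto
          qed
        qed
      qed
    qed
    have "card ({..<n} - g ` {..<n}) < card ({..<n} - f ` {..<n})"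
      unfolding gimg using z by (intro psubset_card_mono) auto
    then have "inM g" using less.hyps gM by blast
    moreover have "z \<noteq> f s'" using z(2) rs'(2) by auto
    then have "inM (elem z (f s'))" using z z0 rs' ext by (intro inM_elem) auto
    moreover have "elem z (f s') \<circ> g = f"
    proof
      fix q show "(elem z (f s') \<circ> g) q = f q"
      proof (cases "q < n")
        case True then show ?thesis using z by (auto simp: g_def elem_def)
      next
        case False then show ?thesis using ext z by (auto simp: g_def elem_def)
      qed
    qed
    ultimately show ?thesis using inM_comp by metis
  qed
qed

lemma wt_bb: "wt [Lb, Lb] = id"
  using n3 by (auto simp: fun_eq_iff word_trans_def)

lemma wt_single: "wt [x] = (\<lambda>q. if q < n then W_delta n q x else q)"
  by (auto simp: fun_eq_iff word_trans_def)

lemma wt_shape: "extf n (wt w) \<and> (wt w 0 = 0 \<or> (\<forall>q<n. wt w q = wt w 0))"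
proof (induction w rule: rev_induct)
  case Nil then show ?case by (auto simp: word_trans_def extf_def)
next
  case (snoc x w)
  have e: "wt (w @ [x]) = wt [x] \<circ> wt w" by (rule wt_append)
  have ex: "extf n (wt (w @ [x]))" by (rule word_trans_extf[where A = UNIV]) (auto simp: W_range)
  have w0: "wt w 0 < n" using snoc.IH n3 by (auto simp: extf_def)
  show ?case
  proof (cases "wt w 0 = 0")
    case True
    show ?thesis
    proof (cases "x = Le")
      case True
      have lt: "\<forall>q<n. wt w q < n" using snoc.IH by (auto simp: extf_def)
      have "\<forall>q<n. wt (w @ [x]) q = wt (w @ [x]) 0"
      proof (intro allI impI)
        fix q assume "q < n"
        have "wt (w @ [x]) q = W_delta n (wt w q) x" using e lt \<open>q < n\<close> by (simp add: wt_single)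
        then have "wt (w @ [x]) q = 1" using True by simp
        moreover have "wt (w @ [x]) 0 = W_delta n (wt w 0) x" using e lt n3 by (simp add: wt_single)
        then have "wt (w @ [x]) 0 = 1" using True by simp
        ultimately show "wt (w @ [x]) q = wt (w @ [x]) 0" by simp
      qed
      then show ?thesis using ex by blast
    next
      case False
      then have "W_delta n 0 x = 0" using n3 by (cases x) auto
      moreover have "wt (w @ [x]) 0 = W_delta n (wt w 0) x" using e n3 w0 by (simp add: wt_single)
      ultimately have "wt (w @ [x]) 0 = 0" using \<open>wt w 0 = 0\<close> by simp
      then show ?thesis using ex by blast
    qed
  next
    case False
    have "wt w 0 = 0 \<or> (\<forall>q<n. wt w q = wt w 0)" using snoc.IH by (rule conjunct2)
    then have c: "\<forall>q<n. wt w q = wt w 0" using False by (elim disjE) (simp, assumption)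
    obtain c0 where c0: "wt w 0 = c0" by simp
    have c': "\<forall>q<n. wt w q = c0" using c c0 by metis
    have "\<forall>q<n. wt (w @ [x]) q = W_delta n c0 x"
      using c' e w0 c0 by (simp add: wt_single)
    then have "\<forall>q<n. wt (w @ [x]) q = wt (w @ [x]) 0" using n3 by simp
    then show ?thesis using ex by blast
  qed
qed

lemma wt_in_UU: "wt w \<in> UU n"
proof (cases "wt w 0 = 0")
  case True
  have "extf n (wt w)" using wt_shape[of w] by blast
  then show ?thesis using True by (simp add: UU_def Maps0_def)
next
  case False
  obtain c0 where c0: "wt w 0 = c0" by simp
  have ex: "extf n (wt w)" using wt_shape[of w] by (rule conjunct1)
  have "wt w 0 = 0 \<or> (\<forall>q<n. wt w q = wt w 0)" using wt_shape[of w] by (rule conjunct2)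
  then have "\<forall>q<n. wt w q = wt w 0" using False by (elim disjE) (simp, assumption)
  then have c: "\<forall>q<n. wt w q = c0" using c0 by metis
  have "c0 < n" using ex n3 c0 by (auto simp: extf_def)
  moreover have "wt w = cst n c0"
  proof
    fix q show "wt w q = cst n c0 q" using ex c by (cases "q < n") (auto simp: cst_def extf_def)
  qed
  moreover have "c0 \<noteq> 0" using False c0 by simp
  ultimately have "wt w \<in> cst n ` {1..<n}" by (intro rev_image_eqI[of c0]) auto
  then show ?thesis by (simp add: UU_def)
qed

lemma S_eq_UU: "S n = UU n"
proof
  show "S n \<subseteq> UU n" using wt_in_UU by (auto simp: S_def trans_semigroup_def)
next
  show "UU n \<subseteq> S n"
  proof
    fix f assume "f \<in> UU n"
    then consider "f \<in> Maps0 n" | c where "c \<in> {1..<n}" "f = cst n c" by (auto simp: UU_def)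
    then show "f \<in> S n"
    proof cases
      case 1
      then obtain w where w: "f = wt w" using Maps0_inM inM_def by blast
      have "wt (w @ [Lb, Lb]) = f" using w wt_append wt_bb by simp
      then show ?thesis unfolding S_def trans_semigroup_def by (intro CollectI exI[of _ "w @ [Lb, Lb]"]) simp
    next
      case 2
      have "wt (Le # replicate (c - 1) La) = cst n c"
      proof
        fix q show "wt (Le # replicate (c - 1) La) q = cst n c q"
        proof (cases "q < n")
          case True
          have "foldl (W_delta n) q (Le # replicate (c - 1) La) = rot (c - 1) 1"
            using foldl_rot[of 1 "c - 1"] n3 by simp
          also have "\<dots> = c" using rot_1[of "c - 1"] 2 by (simp add: less_diff_conv)
          finally show ?thesis using True by (simp add: word_trans_def cst_def)
        qed (simp add: word_trans_def cst_def)
      qed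
      then show ?thesis using 2 unfolding S_def trans_semigroup_def
        by (intro CollectI exI[of _ "Le # replicate (c - 1) La"]) auto
    qed
  qed
qed

end


lemma extf_finite: "finite {f. extf n f}"
proof -
  let ?r = "\<lambda>f. restrict f {..<n}"
  have inj: "inj_on ?r {f. extf n f}"
  proof (rule inj_onI)
    fix f g assume f: "f \<in> {f. extf n f}" and g: "g \<in> {f. extf n f}" and e: "?r f = ?r g"
    show "f = g"
    proof
      fix x
      show "f x = g x"
      proof (cases "x < n")
        case True then show ?thesis using e by (metis lessThan_iff restrict_apply')
      next
        case False then show ?thesis using f g by (simp add: extf_def)
      qed
    qed
  qed
  have sub: "?r ` {f. extf n f} \<subseteq> (\<Pi>\<^sub>E i\<in>{..<n}. {..<n})"
  proof (rule image_subsetI)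
    fix f assume "f \<in> {f. extf n f}"
    then show "?r f \<in> (\<Pi>\<^sub>E i\<in>{..<n}. {..<n})" by (auto simp: extf_def Pi_iff)
  qed
  have finP: "finite (\<Pi>\<^sub>E i\<in>{..<n}. {..<n})" by (intro finite_PiE) auto
  have "finite (?r ` {f. extf n f})" using finite_subset[OF sub finP] .
  then show ?thesis using inj by (simp add: finite_image_iff)
qed

lemma Maps0_card: "finite (Maps0 n) \<and> card (Maps0 n) \<le> n ^ (n - 1)"
proof -
  let ?r = "\<lambda>f. restrict f {1..<n}"
  have inj: "inj_on ?r (Maps0 n)"
  proof (rule inj_onI)
    fix f g assume f: "f \<in> Maps0 n" and g: "g \<in> Maps0 n" and e: "?r f = ?r g"
    show "f = g"
    proof
      fix x
      show "f x = g x"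
      proof (cases "x = 0")
        case True then show ?thesis using f g by (simp add: Maps0_def)
      next
        case False
        show ?thesis
        proof (cases "x < n")
          case True
          then have "x \<in> {1..<n}" using False by simp
          then show ?thesis using e by (metis restrict_apply')
        next
          case False then show ?thesis using f g by (simp add: Maps0_def extf_def)
        qed
      qed
    qed
  qed
  have sub: "?r ` Maps0 n \<subseteq> (\<Pi>\<^sub>E i\<in>{1..<n}. {..<n})"
  proof (rule image_subsetI)
    fix f assume "f \<in> Maps0 n"
    then show "?r f \<in> (\<Pi>\<^sub>E i\<in>{1..<n}. {..<n})" by (auto simp: Maps0_def extf_def Pi_iff)
  qed
  have finP: "finite (\<Pi>\<^sub>E i\<in>{1..<n}. {..<n})" by (intro finite_PiE) auto
  have cP: "card (\<Pi>\<^sub>E i\<in>{1..<n}. {..<n}) = n ^ (n - 1)" by (simp add: card_PiE)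
  have "finite (?r ` Maps0 n)" using finite_subset[OF sub finP] .
  then have fin: "finite (Maps0 n)" using inj by (simp add: finite_image_iff)
  have "card (Maps0 n) = card (?r ` Maps0 n)" using inj by (simp add: card_image)
  also have "\<dots> \<le> n ^ (n - 1)" using card_mono[OF finP sub] cP by simp
  finally show ?thesis using fin by simp
qed

lemma UU_card: "card (UU n) \<le> n ^ (n - 1) + (n - 1)"
proof -
  have "card (UU n) \<le> card (Maps0 n) + card (cst n ` {1..<n})" unfolding UU_def by (rule card_Un_le)
  also have "card (cst n ` {1..<n}) \<le> n - 1" using card_image_le[of "{1..<n}" "cst n"] by simp
  finally show ?thesis using Maps0_card[of n] by simp
qed

lemma UU_finite: "finite (UU n)"
  using Maps0_card[of n] by (simp add: UU_def)

lemma arith_helper: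
  fixes M a b c d k N m :: nat
  assumes "M \<le> a + b + c" "b \<le> d - 1" "c \<le> m - 1" "a + d = k" "d \<ge> 1" "k \<le> N" "m \<ge> 1"
  shows "M + 2 \<le> N + m"
  using assms by linarith

locale pob =
  fixes n :: nat and le :: "nat \<Rightarrow> nat \<Rightarrow> bool"
  assumes n3: "3 \<le> n"
  and le_refl': "q < n \<Longrightarrow> le q q"
  and le_antisym': "p < n \<Longrightarrow> q < n \<Longrightarrow> le p q \<Longrightarrow> le q p \<Longrightarrow> p = q"
  and le_trans': "p < n \<Longrightarrow> q < n \<Longrightarrow> r < n \<Longrightarrow> le p q \<Longrightarrow> le q r \<Longrightarrow> le p r"
  and le_bot': "q < n \<Longrightarrow> le 0 q"
begin

definition lt :: "nat \<Rightarrow> nat \<Rightarrow> bool" where "lt p q \<longleftrightarrow> le p q \<and> p \<noteq> q"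

definition monof :: "(nat \<Rightarrow> nat) \<Rightarrow> bool" where
  "monof f \<longleftrightarrow> (\<forall>p<n. \<forall>q<n. le p q \<longrightarrow> le (f p) (f q))"

definition Mon :: "(nat \<Rightarrow> nat) set" where "Mon = {f. extf n f \<and> monof f}"

definition XX :: "(nat \<Rightarrow> nat) set" where "XX = {f \<in> Mon. f 0 \<noteq> 0 \<and> (\<exists>r<n. f r \<noteq> f 0)}"

definition NN :: "(nat \<Rightarrow> nat) set" where "NN = Maps0 n - Mon"

lemma X_facts:
  assumes "f \<in> XX"
  shows "f 0 < n" "f 0 \<noteq> 0" "\<And>r. r < n \<Longrightarrow> le (f 0) (f r)" "\<And>r. r < n \<Longrightarrow> f r \<noteq> 0"
    "\<And>r. r < n \<Longrightarrow> f r < n" "\<And>r. n \<le> r \<Longrightarrow> f r = r"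
    "\<And>p q. p < n \<Longrightarrow> q < n \<Longrightarrow> le p q \<Longrightarrow> le (f p) (f q)" "\<exists>r<n. f r \<noteq> f 0"
proof -
  have ex: "extf n f" and mo: "monof f" and nz: "f 0 \<noteq> 0" and nc: "\<exists>r<n. f r \<noteq> f 0"
    using assms by (auto simp: XX_def Mon_def)
  have n0: "0 < n" using n3 by simp
  show fr: "\<And>r. r < n \<Longrightarrow> f r < n" "\<And>r. n \<le> r \<Longrightarrow> f r = r" using ex by (auto simp: extf_def)
  show "f 0 < n" using fr n0 by simp
  show "f 0 \<noteq> 0" by fact
  show m: "\<And>p q. p < n \<Longrightarrow> q < n \<Longrightarrow> le p q \<Longrightarrow> le (f p) (f q)" using mo by (auto simp: monof_def)
  show lb: "\<And>r. r < n \<Longrightarrow> le (f 0) (f r)" using m le_bot' n0 by blast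
  show "\<And>r. r < n \<Longrightarrow> f r \<noteq> 0"
  proof
    fix r assume "r < n" "f r = 0"
    then have "le (f 0) 0" using lb by metis
    moreover have "le 0 (f 0)" using le_bot' fr n0 by blast
    ultimately have "f 0 = 0" using le_antisym' fr n0 by blast
    then show False using nz by simp
  qed
  show "\<exists>r<n. f r \<noteq> f 0" by fact
qed

lemma lt_le: "lt p q \<Longrightarrow> le p q" by (simp add: lt_def)

lemma not_lt_both: "p < n \<Longrightarrow> q < n \<Longrightarrow> lt p q \<Longrightarrow> lt q p \<Longrightarrow> False"
  using le_antisym' by (auto simp: lt_def)

lemma not_le_zero: "0 < p \<Longrightarrow> p < n \<Longrightarrow> \<not> le p 0"
  using le_antisym' le_bot' by fastforce

lemma pair_unique:
  assumes f: "f \<in> XX" and p: "p = f 0" and w: "0 < w" "w < n" "lt p w"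
    and a: "\<not> le a p"
    and noB1: "\<And>w'. 0 < w' \<Longrightarrow> w' < n \<Longrightarrow> lt p w' \<Longrightarrow> f w' \<noteq> p"
    and h: "h = f(0 := 0, p := a, w := p)"
    and z: "0 < z" "z < n" and w': "0 < w'" "w' < n" and zw: "lt z w'" "h w' = z" "\<not> le (h z) z"
  shows "z = p \<and> w' = w"
proof -
  note FX = X_facts[OF f]
  have p0: "p \<noteq> 0" "p < n" using FX p by auto
  have pw: "p \<noteq> w" using w(3) by (simp add: lt_def)
  show ?thesis
  proof (cases "w' = w")
    case True then show ?thesis using zw w h by auto
  next
    case False
    show ?thesis
    proof (cases "w' = p")
      case True
      then have "z = a" using zw(2) h pw p0 by auto
      then show ?thesis using zw(1) a True by (simp add: lt_def)
    next
      case False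
      have hw': "h w' = f w'" using False \<open>w' \<noteq> w\<close> w' h by auto
      show ?thesis
      proof (cases "z = p")
        case True
        then have "f w' = p" using hw' zw by simp
        then show ?thesis using noB1[OF w'] zw(1) True by simp
      next
        case False
        show ?thesis
        proof (cases "z = w")
          case True
          then have "h z = p" using h w by auto
          then show ?thesis using zw(3) w(3) True by (simp add: lt_def)
        next
          case False
          then have "h z = f z" using \<open>z \<noteq> p\<close> z h by auto
          moreover have "le (f z) (f w')" using FX(7)[OF z(2) w'(2)] zw(1) by (simp add: lt_def)
          ultimately show ?thesis using zw hw' by simp
        qed
      qed
    qed
  qed
qed

definition enc :: "(nat \<Rightarrow> nat) \<Rightarrow> nat \<Rightarrow> nat" where
  "enc f = (let p = f 0 in
    if f p \<noteq> p then f(0 := 0, p := f (f p), f p := p)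
    else if \<exists>w. 0 < w \<and> w < n \<and> lt p w \<and> f w = p
      then f(0 := 0, (SOME w. 0 < w \<and> w < n \<and> lt p w \<and> f w = p) := 0)
    else if \<exists>w. 0 < w \<and> w < n \<and> lt p w \<and> \<not> le w (f w)
      then (let w = SOME w. 0 < w \<and> w < n \<and> lt p w \<and> \<not> le w (f w) in f(0 := 0, p := f w, w := p))
    else (let c = SOME c. 0 < c \<and> c < n \<and> lt p c \<and> (\<forall>d. 0 < d \<and> d < n \<longrightarrow> \<not> lt c d) in
      if \<exists>z. 0 < z \<and> z < n \<and> lt z c \<and> z \<noteq> p then f(0 := 0, c := 0, p := 0)
      else f(0 := 0, c := 0, p := c)))"

definition dec :: "(nat \<Rightarrow> nat) \<Rightarrow> nat \<Rightarrow> nat" where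
  "dec h = (if \<exists>q. 0 < q \<and> q < n \<and> h q = 0 then
     (if \<exists>a b. 0 < a \<and> a < n \<and> 0 < b \<and> b < n \<and> h a = 0 \<and> h b = 0 \<and> lt a b then
        (let ab = SOME ab. 0 < fst ab \<and> fst ab < n \<and> 0 < snd ab \<and> snd ab < n \<and> h (fst ab) = 0 \<and> h (snd ab) = 0 \<and> lt (fst ab) (snd ab)
         in h(0 := fst ab, snd ab := snd ab, fst ab := fst ab))
      else (let w = SOME w. 0 < w \<and> w < n \<and> h w = 0 in
        (if \<exists>p. 0 < p \<and> p < n \<and> lt p w \<and> h p = p then
           (let p = SOME p. 0 < p \<and> p < n \<and> lt p w \<and> h p = p in h(0 := p, w := p))
         else (let p = SOME p. 0 < p \<and> p < n \<and> lt p w in h(0 := p, w := w, p := p)))))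
   else (let zw = SOME zw. 0 < fst zw \<and> fst zw < n \<and> 0 < snd zw \<and> snd zw < n \<and> lt (fst zw) (snd zw) \<and> h (snd zw) = fst zw \<and> \<not> le (h (fst zw)) (fst zw) in
     (if le (snd zw) (h (fst zw)) then h(0 := fst zw, fst zw := snd zw, snd zw := h (fst zw))
      else h(0 := fst zw, fst zw := fst zw, snd zw := h (fst zw)))))"

lemma in_NN:
  assumes "\<forall>q<n. h q < n" "\<forall>q. n \<le> q \<longrightarrow> h q = q" "h 0 = 0"
    and "a < n" "b < n" "le a b" "\<not> le (h a) (h b)"
  shows "h \<in> NN"
  using assms by (auto simp: NN_def Maps0_def extf_def Mon_def monof_def)

lemma caseA:
  assumes f: "f \<in> XX" and A: "f (f 0) \<noteq> f 0"
  shows "enc f \<in> NN \<and> dec (enc f) = f \<and> (\<forall>q. 0 < q \<and> q < n \<longrightarrow> enc f q \<noteq> 0)"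
proof -
  note FX = X_facts[OF f]
  define p where "p = f 0"
  define v where "v = f p"
  have p: "0 < p" "p < n" using FX p_def by auto
  have v: "0 < v" "v < n" using FX p v_def by auto
  have pv: "p \<noteq> v" using A p_def v_def by simp
  have ltpv: "lt p v" using FX(3)[OF p(2)] pv p_def v_def by (simp add: lt_def)
  define h where "h = f(0 := 0, p := f v, v := p)"
  have he: "enc f = h" using A unfolding enc_def h_def p_def v_def Let_def by simp
  have lev: "le v (f v)" using FX(7)[OF p(2) v(2)] ltpv v_def by (simp add: lt_def)
  have fv: "0 < f v" "f v < n" using FX v by auto
  have a: "\<not> le (f v) p"
  proof
    assume "le (f v) p"
    then have "le v p" using le_trans'[OF v(2) fv(2) p(2)] lev by blast
    then show False using le_antisym'[OF p(2) v(2)] ltpv pv by (simp add: lt_def)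
  qed
  have noB1: "f w' \<noteq> p" if "0 < w'" "w' < n" "lt p w'" for w'
  proof
    assume "f w' = p"
    then have "le v p" using FX(7)[OF p(2) that(2)] that(3) v_def by (simp add: lt_def)
    then show False using le_antisym'[OF p(2) v(2)] ltpv pv by (simp add: lt_def)
  qed
  have hv: "h 0 = 0" "h p = f v" "h v = p" "\<And>q. q \<noteq> 0 \<Longrightarrow> q \<noteq> p \<Longrightarrow> q \<noteq> v \<Longrightarrow> h q = f q"
    using pv p v by (auto simp: h_def)
  have nz: "\<forall>q. 0 < q \<and> q < n \<longrightarrow> h q \<noteq> 0"
  proof (intro allI impI)
    fix q assume q: "0 < q \<and> q < n"
    show "h q \<noteq> 0"
      using hv FX(4)[of q] FX(4)[OF v(2)] p q by (cases "q = p"; cases "q = v") auto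
  qed
  have NN: "h \<in> NN"
  proof (rule in_NN[where h = h and a = p and b = v])
    show "\<forall>q<n. h q < n" using FX(5) p v by (auto simp: h_def)
    show "\<forall>q. n \<le> q \<longrightarrow> h q = q" using FX(6) p v by (auto simp: h_def)
    show "le p v" using ltpv by (simp add: lt_def)
    show "\<not> le (h p) (h v)" using hv a by simp
  qed (use hv p v in auto)
  have uniq: "z = p \<and> w' = v" if "0 < z" "z < n" "0 < w'" "w' < n" "lt z w'" "h w' = z" "\<not> le (h z) z" for z w'
    by (rule pair_unique[OF f p_def v(1) v(2) ltpv a noB1 h_def that]) auto
  let ?P = "\<lambda>zw. 0 < fst zw \<and> fst zw < n \<and> 0 < snd zw \<and> snd zw < n \<and> lt (fst zw) (snd zw) \<and> h (snd zw) = fst zw \<and> \<not> le (h (fst zw)) (fst zw)"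
  have Pp: "?P (p, v)" using p v ltpv hv a by simp
  have some: "(SOME zw. ?P zw) = (p, v)"
  proof (rule some_equality[where P = ?P])
    show "?P (p, v)" by (rule Pp)
  next
    fix zw assume "?P zw"
    then show "zw = (p, v)" using uniq[of "fst zw" "snd zw"] by (cases zw) auto
  qed
  have "dec h = h(0 := p, p := v, v := h p)"
    using nz some lev hv unfolding dec_def Let_def by auto
  also have "\<dots> = f"
  proof
    fix x show "(h(0 := p, p := v, v := h p)) x = f x"
      using hv p_def v_def pv p v by (cases "x = 0"; cases "x = p"; cases "x = v") auto
  qed
  finally show ?thesis using he NN nz by simp
qed

lemma caseB2:
  assumes f: "f \<in> XX" and B: "f (f 0) = f 0"
    and nB1: "\<not> (\<exists>w. 0 < w \<and> w < n \<and> lt (f 0) w \<and> f w = f 0)"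
    and B2: "\<exists>w. 0 < w \<and> w < n \<and> lt (f 0) w \<and> \<not> le w (f w)"
  shows "enc f \<in> NN \<and> dec (enc f) = f \<and> (\<forall>q. 0 < q \<and> q < n \<longrightarrow> enc f q \<noteq> 0)"
proof -
  note FX = X_facts[OF f]
  define p where "p = f 0"
  define w where "w = (SOME w. 0 < w \<and> w < n \<and> lt p w \<and> \<not> le w (f w))"
  have p: "0 < p" "p < n" using FX p_def by auto
  have nB1': "\<not> (\<exists>w. 0 < w \<and> w < n \<and> lt p w \<and> f w = p)" using nB1 unfolding p_def .
  have B2': "\<exists>w. 0 < w \<and> w < n \<and> lt p w \<and> \<not> le w (f w)" using B2 unfolding p_def .
  have "0 < w \<and> w < n \<and> lt p w \<and> \<not> le w (f w)" unfolding w_def by (rule someI_ex[OF B2'])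
  then have w: "0 < w" "w < n" "lt p w" "\<not> le w (f w)" by simp_all
  have pw: "p \<noteq> w" using w(3) by (simp add: lt_def)
  define h where "h = f(0 := 0, p := f w, w := p)"
  have c1: "(\<exists>w. 0 < w \<and> w < n \<and> lt p w \<and> f w = p) = False" using nB1' by simp
  have c2: "(\<exists>w. 0 < w \<and> w < n \<and> lt p w \<and> \<not> le w (f w)) = True" using B2' by simp
  have Bp: "f p = p" using B p_def by simp
  have he: "enc f = h" unfolding enc_def Let_def p_def[symmetric] h_def w_def
    by (simp only: Bp c1 c2 if_False if_True simp_thms)
  have fw: "0 < f w" "f w < n" using FX w by auto
  have fwp: "f w \<noteq> p" using nB1' w by blast
  have a: "\<not> le (f w) p"
  proof
    assume "le (f w) p"
    moreover have "le p (f w)" using FX(3)[OF w(2)] p_def by simp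
    ultimately show False using le_antisym'[OF p(2) fw(2)] fwp by simp
  qed
  have noB1: "f w' \<noteq> p" if "0 < w'" "w' < n" "lt p w'" for w'
    using nB1' that by blast
  have hv: "h 0 = 0" "h p = f w" "h w = p" "\<And>q. q \<noteq> 0 \<Longrightarrow> q \<noteq> p \<Longrightarrow> q \<noteq> w \<Longrightarrow> h q = f q"
    using pw p w by (auto simp: h_def)
  have nz: "\<forall>q. 0 < q \<and> q < n \<longrightarrow> h q \<noteq> 0"
  proof (intro allI impI)
    fix q assume q: "0 < q \<and> q < n"
    show "h q \<noteq> 0"
      using hv FX(4)[of q] FX(4)[OF w(2)] p q by (cases "q = p"; cases "q = w") auto
  qed
  have NN: "h \<in> NN"
  proof (rule in_NN[where h = h and a = p and b = w])
    show "\<forall>q<n. h q < n" using FX(5) p w by (auto simp: h_def)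
    show "\<forall>q. n \<le> q \<longrightarrow> h q = q" using FX(6) p w by (auto simp: h_def)
    show "le p w" using w(3) by (simp add: lt_def)
    show "\<not> le (h p) (h w)" using hv a by simp
  qed (use hv p w in auto)
  have uniq: "z = p \<and> w' = w" if "0 < z" "z < n" "0 < w'" "w' < n" "lt z w'" "h w' = z" "\<not> le (h z) z" for z w'
    by (rule pair_unique[OF f p_def w(1) w(2) w(3) a noB1 h_def that]) auto
  let ?P = "\<lambda>zw. 0 < fst zw \<and> fst zw < n \<and> 0 < snd zw \<and> snd zw < n \<and> lt (fst zw) (snd zw) \<and> h (snd zw) = fst zw \<and> \<not> le (h (fst zw)) (fst zw)"
  have Pp: "?P (p, w)" using p w hv a by simp
  have some: "(SOME zw. ?P zw) = (p, w)"
  proof (rule some_equality[where P = ?P])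
    show "?P (p, w)" by (rule Pp)
  next
    fix zw assume "?P zw"
    then show "zw = (p, w)" using uniq[of "fst zw" "snd zw"] by (cases zw) auto
  qed
  have "dec h = h(0 := p, p := p, w := h p)"
    using nz some w(4) hv unfolding dec_def Let_def by auto
  also have "\<dots> = f"
  proof
    fix x show "(h(0 := p, p := p, w := h p)) x = f x"
      using hv p_def B pw p w by (cases "x = 0"; cases "x = p"; cases "x = w") auto
  qed
  finally show ?thesis using he NN nz by simp
qed

lemma caseB1:
  assumes f: "f \<in> XX" and B: "f (f 0) = f 0"
    and B1: "\<exists>w. 0 < w \<and> w < n \<and> lt (f 0) w \<and> f w = f 0"
  shows "enc f \<in> NN \<and> dec (enc f) = f \<and>
    (\<exists>w p. 0 < w \<and> w < n \<and> (\<forall>q. 0 < q \<and> q < n \<longrightarrow> (enc f q = 0 \<longleftrightarrow> q = w)) \<and>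
       0 < p \<and> p < n \<and> lt p w \<and> enc f p = p \<and> p = f 0 \<and> f w = p \<and> (\<forall>q. q \<noteq> 0 \<and> q \<noteq> w \<longrightarrow> enc f q = f q))"
proof -
  note FX = X_facts[OF f]
  define p where "p = f 0"
  define w where "w = (SOME w. 0 < w \<and> w < n \<and> lt p w \<and> f w = p)"
  have p: "0 < p" "p < n" using FX p_def by auto
  have B1': "\<exists>w. 0 < w \<and> w < n \<and> lt p w \<and> f w = p" using B1 unfolding p_def .
  have "0 < w \<and> w < n \<and> lt p w \<and> f w = p" unfolding w_def by (rule someI_ex[OF B1'])
  then have w: "0 < w" "w < n" "lt p w" "f w = p" by simp_all
  have pw: "p \<noteq> w" using w(3) by (simp add: lt_def)
  define h where "h = f(0 := 0, w := 0)"
  have c1: "(\<exists>w. 0 < w \<and> w < n \<and> lt p w \<and> f w = p) = True" using B1' by simp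
  have Bp: "f p = p" using B p_def by simp
  have he: "enc f = h" unfolding enc_def Let_def p_def[symmetric] h_def w_def
    by (simp only: Bp c1 if_False if_True simp_thms)
  have hv: "h 0 = 0" "h w = 0" "h p = p" "\<And>q. q \<noteq> 0 \<Longrightarrow> q \<noteq> w \<Longrightarrow> h q = f q"
    using pw p w B p_def by (auto simp: h_def)
  have zero: "\<forall>q. 0 < q \<and> q < n \<longrightarrow> (h q = 0 \<longleftrightarrow> q = w)"
  proof (intro allI impI)
    fix q assume q: "0 < q \<and> q < n"
    show "h q = 0 \<longleftrightarrow> q = w"
    proof (cases "q = w")
      case False
      then have "h q = f q" using hv(4) q by simp
      then show ?thesis using FX(4) q False by simp
    qed (simp add: hv)
  qed
  have NN: "h \<in> NN"
  proof (rule in_NN[where h = h and a = p and b = w])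
    show "\<forall>q<n. h q < n" using FX(5) p w by (auto simp: h_def)
    show "\<forall>q. n \<le> q \<longrightarrow> h q = q" using FX(6) p w by (auto simp: h_def)
    show "le p w" using w(3) by (simp add: lt_def)
    show "\<not> le (h p) (h w)" using hv not_le_zero p by simp
  qed (use hv p w in auto)
  have notwo: "\<not> (\<exists>a b. 0 < a \<and> a < n \<and> 0 < b \<and> b < n \<and> h a = 0 \<and> h b = 0 \<and> lt a b)"
    using zero by (auto simp: lt_def)
  have somew: "(SOME w'. 0 < w' \<and> w' < n \<and> h w' = 0) = w"
    by (rule some_equality) (use zero w in blast)+
  have fixu: "z = p" if "0 < z" "z < n" "lt z w" "h z = z" for z
  proof -
    have zw: "z \<noteq> w" using that(3) by (simp add: lt_def)
    then have fz: "f z = z" using that hv by simp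
    have "le z p" using FX(7)[OF that(2) w(2)] that(3) fz w(4) by (simp add: lt_def)
    moreover have "le p z" using FX(3)[OF that(2)] fz p_def by simp
    ultimately show ?thesis using le_antisym' that(2) p(2) by blast
  qed
  have somep: "(SOME p'. 0 < p' \<and> p' < n \<and> lt p' w \<and> h p' = p') = p"
  proof (rule some_equality)
    show "0 < p \<and> p < n \<and> lt p w \<and> h p = p" using p w(3) hv(3) by simp
  qed (use fixu in blast)
  have "\<exists>p'. 0 < p' \<and> p' < n \<and> lt p' w \<and> h p' = p'" using p w(3) hv(3) by blast
  then have ex: "(\<exists>p'. 0 < p' \<and> p' < n \<and> lt p' w \<and> h p' = p') = True" by simp
  have "\<exists>q. 0 < q \<and> q < n \<and> h q = 0" using w(1,2) hv(2) by blast
  then have d1: "(\<exists>q. 0 < q \<and> q < n \<and> h q = 0) = True" by simp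
  have notwo': "(\<exists>a b. 0 < a \<and> a < n \<and> 0 < b \<and> b < n \<and> h a = 0 \<and> h b = 0 \<and> lt a b) = False"
    using notwo by simp
  have "dec h = h(0 := p, w := p)"
    unfolding dec_def Let_def by (simp only: d1 notwo' somew ex somep if_True if_False)
  also have "\<dots> = f"
  proof
    fix x show "(h(0 := p, w := p)) x = f x"
      using hv p_def w pw p by (cases "x = 0"; cases "x = w") auto
  qed
  finally have "dec (enc f) = f" using he by simp
  moreover have "\<forall>q. q \<noteq> 0 \<and> q \<noteq> w \<longrightarrow> enc f q = f q" using hv he by simp
  moreover have "\<forall>q. 0 < q \<and> q < n \<longrightarrow> (enc f q = 0 \<longleftrightarrow> q = w)" using zero he by simp
  moreover have "enc f p = p" using he hv(3) by simp
  moreover have "enc f \<in> NN" using he NN by simp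
  ultimately show ?thesis using p(1) p(2) w(1) w(2) w(3) w(4)
    by (intro conjI exI[of _ w] exI[of _ p]) (simp_all add: p_def)
qed

lemma exists_max_above:
  assumes v: "0 < v" "v < n"
  shows "\<exists>c. 0 < c \<and> c < n \<and> le v c \<and> (\<forall>d. 0 < d \<and> d < n \<longrightarrow> \<not> lt c d)"
proof -
  define S where "S = {c. c < n \<and> le v c}"
  define g where "g c = card {e. e < n \<and> le e c}" for c
  have fin: "finite S" unfolding S_def by simp
  have ne: "v \<in> S" using v le_refl' by (simp add: S_def)
  define m where "m = Max (g ` S)"
  have "m \<in> g ` S" unfolding m_def using fin ne by (intro Max_in) auto
  then obtain c where c: "c \<in> S" "g c = m" by auto
  have mx: "g d \<le> g c" if "d \<in> S" for d using fin that c(2) unfolding m_def by simp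
  have cn: "c < n" "le v c" using c by (auto simp: S_def)
  have c0: "0 < c"
  proof (rule ccontr)
    assume "\<not> 0 < c" then have "c = 0" by simp
    then have "le v 0" using cn by simp
    then show False using not_le_zero v by simp
  qed
  have "\<not> lt c d" if d: "0 < d" "d < n" for d
  proof
    assume cd: "lt c d"
    then have "le v d" using le_trans'[OF v(2) cn(1) d(2)] cn by (simp add: lt_def)
    then have dS: "d \<in> S" using d by (simp add: S_def)
    have sub: "{e. e < n \<and> le e c} \<subset> {e. e < n \<and> le e d}"
    proof
      show "{e. e < n \<and> le e c} \<subseteq> {e. e < n \<and> le e d}"
      proof
        fix e assume "e \<in> {e. e < n \<and> le e c}"
        then have e: "e < n" "le e c" by auto
        have "le e d" using le_trans'[OF e(1) cn(1) d(2) e(2)] cd by (simp add: lt_def)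
        then show "e \<in> {e. e < n \<and> le e d}" using e by simp
      qed
      have "\<not> le d c"
      proof
        assume "le d c"
        then have "d = c" using le_antisym'[OF d(2) cn(1)] cd by (simp add: lt_def)
        then show False using cd by (simp add: lt_def)
      qed
      then have "d \<notin> {e. e < n \<and> le e c}" by simp
      moreover have "d \<in> {e. e < n \<and> le e d}" using d le_refl' by simp
      ultimately show "{e. e < n \<and> le e c} \<noteq> {e. e < n \<and> le e d}" by blast
    qed
    have "g c < g d" unfolding g_def by (rule psubset_card_mono[OF _ sub]) simp
    then show False using mx[OF dS] by simp
  qed
  then have "\<forall>d. 0 < d \<and> d < n \<longrightarrow> \<not> lt c d" by blast
  then show ?thesis using c0 cn by blast
qed

lemma B3_setup:
  assumes f: "f \<in> XX" and B: "f (f 0) = f 0"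
    and nB1: "\<not> (\<exists>w. 0 < w \<and> w < n \<and> lt (f 0) w \<and> f w = f 0)"
    and nB2: "\<not> (\<exists>w. 0 < w \<and> w < n \<and> lt (f 0) w \<and> \<not> le w (f w))"
  defines "c \<equiv> SOME c. 0 < c \<and> c < n \<and> lt (f 0) c \<and> (\<forall>d. 0 < d \<and> d < n \<longrightarrow> \<not> lt c d)"
  shows "0 < c" "c < n" "lt (f 0) c" "\<And>d. 0 < d \<Longrightarrow> d < n \<Longrightarrow> \<not> lt c d" "f c = c"
proof -
  note FX = X_facts[OF f]
  define p where "p = f 0"
  have p: "0 < p" "p < n" using FX p_def by auto
  obtain r where r: "r < n" "f r \<noteq> p" using FX(8) p_def by auto
  have v: "0 < f r" "f r < n" using FX r by auto
  have ltv: "lt p (f r)" using FX(3)[OF r(1)] r(2) p_def by (simp add: lt_def)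
  obtain c0 where c0: "0 < c0" "c0 < n" "le (f r) c0" "\<And>d. 0 < d \<Longrightarrow> d < n \<Longrightarrow> \<not> lt c0 d"
    using exists_max_above[OF v] by blast
  have "le p c0" using le_trans'[OF p(2) v(2) c0(2)] ltv c0(3) by (simp add: lt_def)
  moreover have "c0 \<noteq> p"
  proof
    assume "c0 = p"
    then have "le (f r) p" using c0(3) by simp
    then show False using le_antisym'[OF p(2) v(2)] ltv by (simp add: lt_def)
  qed
  ultimately have "lt p c0" by (simp add: lt_def)
  then have ex: "\<exists>c. 0 < c \<and> c < n \<and> lt p c \<and> (\<forall>d. 0 < d \<and> d < n \<longrightarrow> \<not> lt c d)" using c0 by blast
  have cc: "0 < c \<and> c < n \<and> lt p c \<and> (\<forall>d. 0 < d \<and> d < n \<longrightarrow> \<not> lt c d)"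
    unfolding c_def p_def[symmetric] by (rule someI_ex[OF ex])
  then show c: "0 < c" "c < n" "lt (f 0) c" "\<And>d. 0 < d \<Longrightarrow> d < n \<Longrightarrow> \<not> lt c d" using p_def by auto
  have "le c (f c)" using nB2 c by blast
  moreover have "0 < f c" "f c < n" using FX c by auto
  ultimately show "f c = c" using c(4)[of "f c"] by (auto simp: lt_def)
qed

lemma caseB3a:
  assumes f: "f \<in> XX" and B: "f (f 0) = f 0"
    and nB1: "\<not> (\<exists>w. 0 < w \<and> w < n \<and> lt (f 0) w \<and> f w = f 0)"
    and nB2: "\<not> (\<exists>w. 0 < w \<and> w < n \<and> lt (f 0) w \<and> \<not> le w (f w))"
  defines "c \<equiv> SOME c. 0 < c \<and> c < n \<and> lt (f 0) c \<and> (\<forall>d. 0 < d \<and> d < n \<longrightarrow> \<not> lt c d)"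
  assumes B3a: "\<exists>z. 0 < z \<and> z < n \<and> lt z c \<and> z \<noteq> f 0"
  shows "enc f \<in> NN \<and> dec (enc f) = f \<and> enc (f) c = 0 \<and> enc f (f 0) = 0 \<and> lt (f 0) c"
proof -
  note FX = X_facts[OF f]
  note C = B3_setup[OF f B nB1 nB2, folded c_def]
  define p where "p = f 0"
  have p: "0 < p" "p < n" using FX p_def by auto
  have pc: "p \<noteq> c" "lt p c" using C(3) p_def by (auto simp: lt_def)
  define h where "h = f(0 := 0, c := 0, p := 0)"
  have Bp: "f p = p" using B p_def by simp
  have c1: "(\<exists>w. 0 < w \<and> w < n \<and> lt p w \<and> f w = p) = False" using nB1 unfolding p_def by simp
  have c2: "(\<exists>w. 0 < w \<and> w < n \<and> lt p w \<and> \<not> le w (f w)) = False" using nB2 unfolding p_def by simp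
  have c3: "(\<exists>z. 0 < z \<and> z < n \<and> lt z c \<and> z \<noteq> p) = True" using B3a unfolding p_def by simp
  have he: "enc f = h" unfolding enc_def Let_def p_def[symmetric] c_def[folded p_def, symmetric] h_def
    by (simp only: Bp c1 c2 c3 if_False if_True simp_thms)
  have hv: "h 0 = 0" "h c = 0" "h p = 0" "\<And>q. q \<noteq> 0 \<Longrightarrow> q \<noteq> c \<Longrightarrow> q \<noteq> p \<Longrightarrow> h q = f q"
    by (auto simp: h_def)
  obtain z where z: "0 < z" "z < n" "lt z c" "z \<noteq> p" using B3a p_def by blast
  have zc: "z \<noteq> c" using z(3) by (simp add: lt_def)
  have NN: "h \<in> NN"
  proof (rule in_NN[where h = h and a = z and b = c])
    show "\<forall>q<n. h q < n" using FX(5) p C by (auto simp: h_def)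
    show "\<forall>q. n \<le> q \<longrightarrow> h q = q" using FX(6) p C by (auto simp: h_def)
    show "le z c" using z(3) by (simp add: lt_def)
    have "h z = f z" using hv(4) z zc by simp
    then show "\<not> le (h z) (h c)" using hv(2) not_le_zero FX(4)[OF z(2)] FX(5)[OF z(2)] by simp
  qed (use hv C z in auto)
  have zero: "\<forall>q. 0 < q \<and> q < n \<longrightarrow> (h q = 0 \<longleftrightarrow> q = c \<or> q = p)"
  proof (intro allI impI)
    fix q assume q: "0 < q \<and> q < n"
    show "h q = 0 \<longleftrightarrow> q = c \<or> q = p"
    proof (cases "q = c \<or> q = p")
      case False
      then have "h q = f q" using hv(4) q by simp
      then show ?thesis using FX(4) q False by simp
    qed (auto simp add: hv)
  qed
  let ?P = "\<lambda>ab. 0 < fst ab \<and> fst ab < n \<and> 0 < snd ab \<and> snd ab < n \<and> h (fst ab) = 0 \<and> h (snd ab) = 0 \<and> lt (fst ab) (snd ab)"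
  have Pp: "?P (p, c)" using p C pc hv by simp
  have some: "(SOME ab. ?P ab) = (p, c)"
  proof (rule some_equality[where P = ?P])
    show "?P (p, c)" by (rule Pp)
  next
    fix ab assume P: "?P ab"
    then have a: "fst ab = c \<or> fst ab = p" and b: "snd ab = c \<or> snd ab = p" using zero by blast+
    have "fst ab \<noteq> snd ab" using P by (simp add: lt_def)
    moreover have "\<not> (fst ab = c \<and> snd ab = p)" using P pc not_lt_both[OF p(2) C(2)] by auto
    ultimately show "ab = (p, c)" using a b by (cases ab) auto
  qed
  have "\<exists>q. 0 < q \<and> q < n \<and> h q = 0" using C(1,2) hv(2) by blast
  then have d1: "(\<exists>q. 0 < q \<and> q < n \<and> h q = 0) = True" by simp
  have "\<exists>a b. 0 < a \<and> a < n \<and> 0 < b \<and> b < n \<and> h a = 0 \<and> h b = 0 \<and> lt a b" using Pp by auto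
  then have d2: "(\<exists>a b. 0 < a \<and> a < n \<and> 0 < b \<and> b < n \<and> h a = 0 \<and> h b = 0 \<and> lt a b) = True" by simp
  have "dec h = h(0 := p, c := c, p := p)"
    unfolding dec_def Let_def by (simp only: d1 d2 some if_True fst_conv snd_conv)
  also have "\<dots> = f"
  proof
    fix x show "(h(0 := p, c := c, p := p)) x = f x"
      using hv p_def Bp C(5) pc p by (cases "x = 0"; cases "x = p"; cases "x = c") auto
  qed
  finally show ?thesis using he NN hv pc p_def by simp
qed

lemma caseB3b:
  assumes f: "f \<in> XX" and B: "f (f 0) = f 0"
    and nB1: "\<not> (\<exists>w. 0 < w \<and> w < n \<and> lt (f 0) w \<and> f w = f 0)"
    and nB2: "\<not> (\<exists>w. 0 < w \<and> w < n \<and> lt (f 0) w \<and> \<not> le w (f w))"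
  defines "c \<equiv> SOME c. 0 < c \<and> c < n \<and> lt (f 0) c \<and> (\<forall>d. 0 < d \<and> d < n \<longrightarrow> \<not> lt c d)"
  assumes nB3a: "\<not> (\<exists>z. 0 < z \<and> z < n \<and> lt z c \<and> z \<noteq> f 0)"
  shows "enc f \<in> NN \<and> dec (enc f) = f \<and>
     (\<forall>q. 0 < q \<and> q < n \<longrightarrow> (enc f q = 0 \<longleftrightarrow> q = c)) \<and> enc f (f 0) = c \<and> lt (f 0) c \<and> 0 < c \<and> c < n"
proof -
  note FX = X_facts[OF f]
  note C = B3_setup[OF f B nB1 nB2, folded c_def]
  define p where "p = f 0"
  have p: "0 < p" "p < n" using FX p_def by auto
  have pc: "p \<noteq> c" "lt p c" using C(3) p_def by (auto simp: lt_def)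
  define h where "h = f(0 := 0, c := 0, p := c)"
  have Bp: "f p = p" using B p_def by simp
  have nz3: "\<not> (\<exists>z. 0 < z \<and> z < n \<and> lt z c \<and> z \<noteq> p)" using nB3a unfolding p_def .
  have c1: "(\<exists>w. 0 < w \<and> w < n \<and> lt p w \<and> f w = p) = False" using nB1 unfolding p_def by simp
  have c2: "(\<exists>w. 0 < w \<and> w < n \<and> lt p w \<and> \<not> le w (f w)) = False" using nB2 unfolding p_def by simp
  have c3: "(\<exists>z. 0 < z \<and> z < n \<and> lt z c \<and> z \<noteq> p) = False" using nz3 by simp
  have he: "enc f = h" unfolding enc_def Let_def p_def[symmetric] c_def[folded p_def, symmetric] h_def
    by (simp only: Bp c1 c2 c3 if_False if_True simp_thms)
  have hv: "h 0 = 0" "h c = 0" "h p = c" "\<And>q. q \<noteq> 0 \<Longrightarrow> q \<noteq> c \<Longrightarrow> q \<noteq> p \<Longrightarrow> h q = f q"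
    using pc p by (auto simp: h_def)
  have NN: "h \<in> NN"
  proof (rule in_NN[where h = h and a = p and b = c])
    show "\<forall>q<n. h q < n" using FX(5) p C by (auto simp: h_def)
    show "\<forall>q. n \<le> q \<longrightarrow> h q = q" using FX(6) p C by (auto simp: h_def)
    show "le p c" using pc by (simp add: lt_def)
    show "\<not> le (h p) (h c)" using hv not_le_zero C by simp
  qed (use hv C p in auto)
  have zero: "\<forall>q. 0 < q \<and> q < n \<longrightarrow> (h q = 0 \<longleftrightarrow> q = c)"
  proof (intro allI impI)
    fix q assume q: "0 < q \<and> q < n"
    show "h q = 0 \<longleftrightarrow> q = c"
    proof (cases "q = c")
      case False
      show ?thesis
      proof (cases "q = p")
        case True then show ?thesis using hv C pc by simp
      next
        case False
        then have "h q = f q" using hv(4) q \<open>q \<noteq> c\<close> by simp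
        then show ?thesis using FX(4) q \<open>q \<noteq> c\<close> by simp
      qed
    qed (simp add: hv)
  qed
  have below: "z = p" if "0 < z" "z < n" "lt z c" for z using nz3 that by blast
  have "\<exists>q. 0 < q \<and> q < n \<and> h q = 0" using C(1,2) hv(2) by blast
  then have d1: "(\<exists>q. 0 < q \<and> q < n \<and> h q = 0) = True" by simp
  have notwo: "(\<exists>a b. 0 < a \<and> a < n \<and> 0 < b \<and> b < n \<and> h a = 0 \<and> h b = 0 \<and> lt a b) = False"
    using zero by (auto simp: lt_def)
  have somew: "(SOME w'. 0 < w' \<and> w' < n \<and> h w' = 0) = c"
  proof (rule some_equality)
    show "0 < c \<and> c < n \<and> h c = 0" using C hv by simp
  qed (use zero in blast)
  have nofix: "(\<exists>p'. 0 < p' \<and> p' < n \<and> lt p' c \<and> h p' = p') = False"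
  proof -
    have "False" if "0 < p'" "p' < n" "lt p' c" "h p' = p'" for p'
    proof -
      have "p' = p" using below that by blast
      then show False using that(4) hv(3) pc by simp
    qed
    then show ?thesis by blast
  qed
  have somep: "(SOME p'. 0 < p' \<and> p' < n \<and> lt p' c) = p"
  proof (rule some_equality)
    show "0 < p \<and> p < n \<and> lt p c" using p pc by simp
  qed (use below in blast)
  have "dec h = h(0 := p, c := c, p := p)"
    unfolding dec_def Let_def by (simp only: d1 notwo somew nofix somep if_True if_False)
  also have "\<dots> = f"
  proof
    fix x show "(h(0 := p, c := c, p := p)) x = f x"
      using hv p_def Bp C(5) pc p by (cases "x = 0"; cases "x = p"; cases "x = c") auto
  qed
  finally have "dec (enc f) = f" using he by simp
  moreover have "\<forall>q. 0 < q \<and> q < n \<longrightarrow> (enc f q = 0 \<longleftrightarrow> q = c)" using zero he by simp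
  moreover have "enc f (f 0) = c" using he hv(3) p_def by simp
  ultimately show ?thesis using he NN pc C p_def by simp
qed

lemma enc_props: assumes f: "f \<in> XX" shows "enc f \<in> NN \<and> dec (enc f) = f"
proof -
  define c where "c = (SOME c. 0 < c \<and> c < n \<and> lt (f 0) c \<and> (\<forall>d. 0 < d \<and> d < n \<longrightarrow> \<not> lt c d))"
  show ?thesis
  proof (cases "f (f 0) \<noteq> f 0")
    case True then show ?thesis using caseA[OF f] by blast
  next
    case False
    then have B: "f (f 0) = f 0" by simp
    show ?thesis
    proof (cases "\<exists>w. 0 < w \<and> w < n \<and> lt (f 0) w \<and> f w = f 0")
      case True then show ?thesis using caseB1[OF f B] by blast
    next
      case nB1: False
      show ?thesis
      proof (cases "\<exists>w. 0 < w \<and> w < n \<and> lt (f 0) w \<and> \<not> le w (f w)")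
        case True then show ?thesis using caseB2[OF f B nB1] by blast
      next
        case nB2: False
        show ?thesis
        proof (cases "\<exists>z. 0 < z \<and> z < n \<and> lt z c \<and> z \<noteq> f 0")
          case True then show ?thesis using caseB3a[OF f B nB1 nB2, folded c_def] by blast
        next
          case False then show ?thesis using caseB3b[OF f B nB1 nB2, folded c_def] by blast
        qed
      qed
    qed
  qed
qed

lemma enc_inj: "inj_on enc XX"
  by (rule inj_on_inverseI[where g = dec]) (use enc_props in blast)

definition hsf :: "nat \<Rightarrow> nat \<Rightarrow> nat \<Rightarrow> nat" where
  "hsf x y = (\<lambda>q. if q = 0 \<or> q = y then 0 else if q < n then x else q)"

lemma hsf_y: "hsf x y y = 0" by (simp add: hsf_def)
lemma hsf_z: "0 < q \<Longrightarrow> q < n \<Longrightarrow> 0 < x \<Longrightarrow> hsf x y q = 0 \<longleftrightarrow> q = y" by (auto simp: hsf_def)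
lemma hsf_x: "0 < q \<Longrightarrow> q < n \<Longrightarrow> q \<noteq> y \<Longrightarrow> hsf x y q = x" by (simp add: hsf_def)

lemma hs_noz:
  assumes "0 < y" "y < n" "\<forall>q. 0 < q \<and> q < n \<longrightarrow> h q \<noteq> 0"
  shows "h \<noteq> hsf x y"
proof
  assume "h = hsf x y"
  then have "h y = 0" by (simp add: hsf_y)
  then show False using assms by blast
qed

lemma hs_B1:
  assumes x: "0 < x" "x < n" and y: "0 < y" "y < n" and f: "f \<in> XX"
    and w: "0 < w" "w < n" "\<forall>q. 0 < q \<and> q < n \<longrightarrow> (enc f q = 0 \<longleftrightarrow> q = w)"
    and p: "0 < p" "p < n" "lt p w" "enc f p = p" "p = f 0" "f w = p" "\<forall>q. q \<noteq> 0 \<and> q \<noteq> w \<longrightarrow> enc f q = f q"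
  shows "enc f \<noteq> hsf x y"
proof
  assume E: "enc f = hsf x y"
  have "enc f y = 0" using E hsf_y by simp
  then have wy: "w = y" using w(3) y by blast
  have pw: "p \<noteq> w" using p(3) by (simp add: lt_def)
  have "hsf x y p = x" using hsf_x[OF p(1) p(2)] pw wy by simp
  then have px: "p = x" using p(4) E by simp
  have "\<forall>r<n. f r = f 0"
  proof (intro allI impI)
    fix r assume r: "r < n"
    show "f r = f 0"
    proof (cases "r = 0 \<or> r = w")
      case True then show ?thesis using p(5) p(6) by auto
    next
      case False
      then have "f r = enc f r" using p(7) by simp
      also have "\<dots> = hsf x y r" using E by simp
      also have "\<dots> = x" using hsf_x[of r] False r wy by simp
      finally show ?thesis using px p(5) by simp
    qed
  qed
  then show False using X_facts(8)[OF f] by blast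
qed

lemma hstar_not_img:
  assumes x: "0 < x" "x < n" and y: "0 < y" "y < n" and xy: "lt x y" and f: "f \<in> XX"
  shows "enc f \<noteq> hsf x y"
proof
  assume E: "enc f = hsf x y"
  note FX = X_facts[OF f]
  have xy': "x \<noteq> y" using xy by (simp add: lt_def)
  define c where "c = (SOME c. 0 < c \<and> c < n \<and> lt (f 0) c \<and> (\<forall>d. 0 < d \<and> d < n \<longrightarrow> \<not> lt c d))"
  show False
  proof (cases "f (f 0) \<noteq> f 0")
    case True
    have "\<forall>q. 0 < q \<and> q < n \<longrightarrow> enc f q \<noteq> 0" using caseA[OF f True] by (rule conjunct2[OF conjunct2])
    then show ?thesis using hs_noz[OF y] E by blast
  next
    case False
    then have B: "f (f 0) = f 0" by simp
    show ?thesis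
    proof (cases "\<exists>w. 0 < w \<and> w < n \<and> lt (f 0) w \<and> f w = f 0")
      case True
      have "\<exists>w p. 0 < w \<and> w < n \<and> (\<forall>q. 0 < q \<and> q < n \<longrightarrow> (enc f q = 0 \<longleftrightarrow> q = w)) \<and>
       0 < p \<and> p < n \<and> lt p w \<and> enc f p = p \<and> p = f 0 \<and> f w = p \<and> (\<forall>q. q \<noteq> 0 \<and> q \<noteq> w \<longrightarrow> enc f q = f q)"
        using caseB1[OF f B True] by (rule conjunct2[OF conjunct2])
      then obtain w p where "0 < w \<and> w < n \<and> (\<forall>q. 0 < q \<and> q < n \<longrightarrow> (enc f q = 0 \<longleftrightarrow> q = w)) \<and>
       0 < p \<and> p < n \<and> lt p w \<and> enc f p = p \<and> p = f 0 \<and> f w = p \<and> (\<forall>q. q \<noteq> 0 \<and> q \<noteq> w \<longrightarrow> enc f q = f q)"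
        by (elim exE)
      then have "enc f \<noteq> hsf x y" using hs_B1[OF x y f] by (elim conjE)
      then show ?thesis using E by simp
    next
      case nB1: False
      show ?thesis
      proof (cases "\<exists>w. 0 < w \<and> w < n \<and> lt (f 0) w \<and> \<not> le w (f w)")
        case True
        have "\<forall>q. 0 < q \<and> q < n \<longrightarrow> enc f q \<noteq> 0" using caseB2[OF f B nB1 True] by (rule conjunct2[OF conjunct2])
        then show ?thesis using hs_noz[OF y] E by blast
      next
        case nB2: False
        note C = B3_setup[OF f B nB1 nB2, folded c_def]
        show ?thesis
        proof (cases "\<exists>z. 0 < z \<and> z < n \<and> lt z c \<and> z \<noteq> f 0")
          case True
          have r: "enc f c = 0 \<and> enc f (f 0) = 0 \<and> lt (f 0) c"
            using caseB3a[OF f B nB1 nB2, folded c_def, OF True] by (rule conjunct2[OF conjunct2])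
          have "hsf x y c = 0" using r E by simp
          then have "c = y" using hsf_z[OF C(1) C(2) x(1)] by simp
          moreover have "hsf x y (f 0) = 0" using r E by simp
          then have "f 0 = y" using hsf_z[OF _ FX(1) x(1)] FX(2) by simp
          ultimately show ?thesis using r by (simp add: lt_def)
        next
          case False
          have r: "(\<forall>q. 0 < q \<and> q < n \<longrightarrow> (enc f q = 0 \<longleftrightarrow> q = c)) \<and> enc f (f 0) = c \<and> lt (f 0) c \<and> 0 < c \<and> c < n"
            using caseB3b[OF f B nB1 nB2, folded c_def, OF False] by (rule conjunct2[OF conjunct2])
          have "enc f y = 0" using E hsf_y by simp
          then have cy: "c = y" using r y by blast
          have "f 0 \<noteq> y" using r cy by (simp add: lt_def)
          then have "hsf x y (f 0) = x" using hsf_x FX(1) FX(2) by simp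
          then show ?thesis using r E cy xy' by simp
        qed
      qed
    qed
  qed
qed

lemma hstar_NN:
  assumes x: "0 < x" "x < n" and y: "0 < y" "y < n" and xy: "lt x y"
  shows "(\<lambda>q. if q = 0 \<or> q = y then 0 else if q < n then x else q) \<in> NN"
proof (rule in_NN[where a = x and b = y])
  have "x \<noteq> y" using xy by (simp add: lt_def)
  then show "\<not> le ((\<lambda>q. if q = 0 \<or> q = y then 0 else if q < n then x else q) x) ((\<lambda>q. if q = 0 \<or> q = y then 0 else if q < n then x else q) y)"
    using x not_le_zero by simp
qed (use x y xy in \<open>auto simp: lt_def\<close>)

lemma Mon_card_lt:
  assumes x: "0 < x" "x < n" and y: "0 < y" "y < n" and xy: "lt x y"
  shows "finite Mon \<and> card Mon < n ^ (n - 1) + n - 1"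
proof -
  define hs where "hs = hsf x y"
  define Mon0 where "Mon0 = Mon \<inter> {f. f 0 = 0}"
  define CC where "CC = {f \<in> Mon. f 0 \<noteq> 0 \<and> (\<forall>r<n. f r = f 0)}"
  have finM0: "finite (Maps0 n)" using Maps0_card by blast
  have hsN: "hs \<in> NN" unfolding hs_def hsf_def by (rule hstar_NN[OF x y xy])
  have NNsub: "NN \<subseteq> Maps0 n" by (auto simp: NN_def)
  have finNN: "finite NN" using finite_subset[OF NNsub finM0] .
  have M0sub: "Mon0 \<subseteq> Maps0 n" by (auto simp: Mon0_def Mon_def Maps0_def)
  have un: "Mon0 \<union> NN = Maps0 n" by (auto simp: Mon0_def NN_def Mon_def Maps0_def)
  have dj: "Mon0 \<inter> NN = {}" by (auto simp: Mon0_def NN_def)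
  have c1: "card Mon0 + card NN = card (Maps0 n)"
    using card_Un_disjoint[OF finite_subset[OF M0sub finM0] finNN dj] un by simp
  have img: "enc ` XX \<subseteq> NN - {hs}"
  proof (rule image_subsetI)
    fix f assume f: "f \<in> XX"
    have "enc f \<in> NN" using enc_props[OF f] by (rule conjunct1)
    moreover have "enc f \<noteq> hs" using hstar_not_img[OF x y xy f] unfolding hs_def .
    ultimately show "enc f \<in> NN - {hs}" by simp
  qed
  have "card XX = card (enc ` XX)" using enc_inj by (simp add: card_image)
  also have "\<dots> \<le> card (NN - {hs})" using card_mono[OF _ img] finNN by simp
  also have "\<dots> = card NN - 1" using hsN finNN by simp
  finally have cX: "card XX \<le> card NN - 1" .
  have "NN \<noteq> {}" using hsN by auto
  then have "0 < card NN" using finNN by (simp add: card_gt_0_iff)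
  then have cNN: "card NN \<ge> 1" by simp
  have CCsub: "CC \<subseteq> cst n ` {1..<n}"
  proof
    fix f assume f: "f \<in> CC"
    obtain d where d: "f 0 = d" by simp
    have ex: "extf n f" using f by (simp add: CC_def Mon_def)
    have d0: "d \<noteq> 0" using f d by (simp add: CC_def)
    have c: "\<forall>r<n. f r = d" using f d unfolding CC_def by blast
    have "d < n" using ex n3 d by (auto simp: extf_def)
    moreover have "f = cst n d"
    proof
      fix q show "f q = cst n d q" using ex c by (cases "q < n") (auto simp: cst_def extf_def)
    qed
    ultimately show "f \<in> cst n ` {1..<n}" using d0 by (intro rev_image_eqI[of d]) auto
  qed
  have cC: "card CC \<le> n - 1"
    using card_mono[OF _ CCsub] card_image_le[of "{1..<n}" "cst n"] by simp
  have Msub: "Mon \<subseteq> Mon0 \<union> XX \<union> CC" by (auto simp: Mon0_def XX_def CC_def)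
  have finMon: "finite Mon" using finite_subset[OF _ extf_finite[of n]] by (auto simp: Mon_def)
  have finU: "finite (Mon0 \<union> XX \<union> CC)"
    using finite_subset[OF _ finMon] by (auto simp: Mon0_def XX_def CC_def)
  have "card Mon \<le> card (Mon0 \<union> XX \<union> CC)" by (rule card_mono[OF finU Msub])
  also have "\<dots> \<le> card (Mon0 \<union> XX) + card CC" by (rule card_Un_le)
  also have "\<dots> \<le> card Mon0 + card XX + card CC" using card_Un_le[of Mon0 XX] by simp
  finally have cM: "card Mon \<le> card Mon0 + card XX + card CC" .
  have cM0: "card (Maps0 n) \<le> n ^ (n - 1)" using Maps0_card by blast
  have "card Mon < n ^ (n - 1) + n - 1"
    using arith_helper[OF cM cX cC c1 cNN cM0] n3 by simp
  then show ?thesis using finMon by simp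
qed

lemma Mon_sub_UU:
  assumes nac: "\<not> (\<exists>x y. 0 < x \<and> x < n \<and> 0 < y \<and> y < n \<and> lt x y)"
  shows "Mon \<subseteq> UU n"
proof
  fix f assume f: "f \<in> Mon"
  have ex: "extf n f" and mo: "monof f" using f by (auto simp: Mon_def)
  have n0: "0 < n" using n3 by simp
  show "f \<in> UU n"
  proof (cases "f 0 = 0")
    case True then show ?thesis using ex by (simp add: UU_def Maps0_def)
  next
    case False
    obtain d where d: "f 0 = d" by simp
    have dn: "d < n" "0 < d" using ex n0 d False by (auto simp: extf_def)
    have c: "\<forall>r<n. f r = d"
    proof (intro allI impI)
      fix r assume r: "r < n"
      have fr: "f r < n" using ex r by (simp add: extf_def)
      have "le (f 0) (f r)" using mo r n0 le_bot'[OF r] unfolding monof_def by blast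
      then have ld: "le d (f r)" using d by simp
      have "f r \<noteq> 0"
      proof
        assume "f r = 0"
        then show False using ld not_le_zero dn by simp
      qed
      then have fr0: "0 < f r" by simp
      show "f r = d"
      proof (rule ccontr)
        assume "f r \<noteq> d"
        then have "lt d (f r)" using ld by (simp add: lt_def)
        then show False using nac dn fr fr0 by blast
      qed
    qed
    have "f = cst n d"
    proof
      fix q show "f q = cst n d q" using ex c by (cases "q < n") (auto simp: cst_def extf_def)
    qed
    then have "f \<in> cst n ` {1..<n}" using dn by (intro rev_image_eqI[of d]) auto
    then show ?thesis by (simp add: UU_def)
  qed
qed

end


lemma final_main:
  fixes n :: nat and \<Sigma> :: "'a set" and \<delta> :: "nat \<Rightarrow> 'a \<Rightarrow> nat" and F :: "nat set"
  assumes n3: "n \<ge> 3"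
    and md: "minimal_dfa n \<Sigma> \<delta> F"
    and li: "left_ideal \<Sigma> (dfa_lang \<Sigma> \<delta> F)"
    and cT: "card (trans_semigroup n \<Sigma> \<delta>) = n ^ (n - 1) + n - 1"
  shows "trans_semigroup n \<Sigma> \<delta> = S n"
proof -
  define K where "K q = {w \<in> lists \<Sigma>. foldl \<delta> q w \<in> F}" for q
  define le where "le p q \<longleftrightarrow> K p \<subseteq> K q" for p q
  have dfa: "is_dfa n \<Sigma> \<delta> F" using md by (simp add: minimal_dfa_def)
  have rng: "\<And>q x. q < n \<Longrightarrow> x \<in> \<Sigma> \<Longrightarrow> \<delta> q x < n" using dfa by (simp add: is_dfa_def)
  have reach: "\<forall>q<n. \<exists>w\<in>lists \<Sigma>. foldl \<delta> 0 w = q" using md by (simp add: minimal_dfa_def)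
  have dist: "\<forall>p<n. \<forall>q<n. p \<noteq> q \<longrightarrow> (\<exists>w\<in>lists \<Sigma>. (foldl \<delta> p w \<in> F) \<noteq> (foldl \<delta> q w \<in> F))"
    using md by (simp add: minimal_dfa_def)
  have Kapp: "v \<in> K (foldl \<delta> p w) \<longleftrightarrow> w @ v \<in> K p" if "w \<in> lists \<Sigma>" for p w v
    using that by (auto simp: K_def)
  interpret P: pob n le
  proof
    show "3 \<le> n" by (rule n3)
    show "le q q" for q by (simp add: le_def)
    show "le p r" if "le p q" "le q r" for p q r using that by (auto simp: le_def)
    show "p = q" if pq: "p < n" "q < n" "le p q" "le q p" for p q
    proof (rule ccontr)
      assume "p \<noteq> q"
      then obtain w where w: "w \<in> lists \<Sigma>" "(foldl \<delta> p w \<in> F) \<noteq> (foldl \<delta> q w \<in> F)"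
        using dist pq(1,2) by blast
      have "K p = K q" using pq(3,4) by (auto simp: le_def)
      then show False using w by (auto simp: K_def)
    qed
    show "le 0 q" if qn: "q < n" for q
    proof -
      obtain u where u: "u \<in> lists \<Sigma>" "foldl \<delta> 0 u = q" using reach qn by blast
      have "v \<in> K q" if v: "v \<in> K 0" for v
      proof -
        have vL: "v \<in> dfa_lang \<Sigma> \<delta> F" using v by (simp add: K_def dfa_lang_def)
        have A: "u @ v \<in> {u @ v | u v. u \<in> lists \<Sigma> \<and> v \<in> dfa_lang \<Sigma> \<delta> F}" using u vL by blast
        have E: "dfa_lang \<Sigma> \<delta> F = {u @ v | u v. u \<in> lists \<Sigma> \<and> v \<in> dfa_lang \<Sigma> \<delta> F}"
          using li by (simp add: left_ideal_def)
        have "u @ v \<in> dfa_lang \<Sigma> \<delta> F" by (subst E) (rule A)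
        then have "foldl \<delta> q v \<in> F" using u by (simp add: dfa_lang_def)
        then show ?thesis using v by (simp add: K_def)
      qed
      then show ?thesis by (auto simp: le_def)
    qed
  qed
  let ?T = "trans_semigroup n \<Sigma> \<delta>"
  have TM: "?T \<subseteq> P.Mon"
  proof
    fix t assume "t \<in> ?T"
    then obtain w where w: "t = word_trans n \<delta> w" "w \<in> lists \<Sigma>" by (auto simp: trans_semigroup_def)
    have ex: "extf n t" unfolding w(1) by (rule word_trans_extf[OF rng w(2)])
    have "le (t p) (t q)" if "p < n" "q < n" "le p q" for p q
    proof -
      have tp: "t p = foldl \<delta> p w" "t q = foldl \<delta> q w" using that w by (auto simp: word_trans_def)
      show ?thesis unfolding le_def tp
      proof
        fix v assume "v \<in> K (foldl \<delta> p w)"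
        then have "w @ v \<in> K p" using Kapp[OF w(2)] by blast
        then have "w @ v \<in> K q" using that(3) by (auto simp: le_def)
        then show "v \<in> K (foldl \<delta> q w)" using Kapp[OF w(2)] by blast
      qed
    qed
    then show "t \<in> P.Mon" using ex by (simp add: P.Mon_def P.monof_def)
  qed
  have finMon: "finite P.Mon" using finite_subset[OF _ extf_finite[of n]] by (auto simp: P.Mon_def)
  have nac: "\<not> (\<exists>x y. 0 < x \<and> x < n \<and> 0 < y \<and> y < n \<and> P.lt x y)"
  proof
    assume "\<exists>x y. 0 < x \<and> x < n \<and> 0 < y \<and> y < n \<and> P.lt x y"
    then obtain x y where xy: "0 < x" "x < n" "0 < y" "y < n" "P.lt x y" by blast
    have "card P.Mon < n ^ (n - 1) + n - 1" using P.Mon_card_lt[OF xy] by blast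
    moreover have "card ?T \<le> card P.Mon" by (rule card_mono[OF finMon TM])
    ultimately show False using cT by simp
  qed
  have TU: "?T \<subseteq> UU n" using TM P.Mon_sub_UU[OF nac] by blast
  have "card (UU n) \<le> card ?T" using UU_card[of n] cT n3 by simp
  then have "?T = UU n" using card_seteq[OF UU_finite TU] by blast
  also have "\<dots> = S n" using S_eq_UU n3 by simp
  finally show ?thesis .
qed


theorem theorem3:
  fixes n :: nat and \<Sigma> :: "'a set" and \<delta> :: "nat \<Rightarrow> 'a \<Rightarrow> nat" and F :: "nat set"
  assumes "n \<ge> 3"
    and "minimal_dfa n \<Sigma> \<delta> F"
    and "left_ideal \<Sigma> (dfa_lang \<Sigma> \<delta> F)"
    and "card (trans_semigroup n \<Sigma> \<delta>) = n ^ (n - 1) + n - 1"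
  shows "trans_semigroup n \<Sigma> \<delta> = S n"
  by (rule final_main[OF assms])

end
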